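(* There is $C_{\boldsymbol\tau,\boldsymbol\eta}>0$ such that for any zero-average $f,g\in W_0^\infty(\mathbb T^{2n})$ with $L_{\boldsymbol\tau}g=L_{\boldsymbol\eta}f$, there is $P\in W^\infty(\mathbb T^{2n})$ with $L_{\boldsymbol\tau}P=f$, $L_{\boldsymbol\eta}P=g$, and for all $s\ge0$, $\|P\|_s\le C_{\boldsymbol\tau,\boldsymbol\eta}(\|f\|_{s+2\gamma}+\|g\|_{s+2\gamma})$.
   Context: $\boldsymbol\tau=(\tau_1,\dots,\tau_n,0,\dots,0)$, $\boldsymbol\eta=(0,\dots,0,\eta_1,\dots,\eta_n)\in\mathbb R^{2n}$, $n\ge2$, with $\sum\tau_j\eta_j=0$, Diophantine: there are $c,\gamma>0$ with $|\boldsymbol\tau\cdot\mathbf m-p|>c|\mathbf m_1\cdot\mathbf m_1|^{-\gamma}$ if $\mathbf m_1\ne0$ and $|\boldsymbol\eta\cdot\mathbf m-p|>c|\mathbf m_2\cdot\mathbf m_2|^{-\gamma}$ if $\mathbf m_2\ne0$, for $\mathbf m=(\mathbf m_1,\mathbf m_2)\in\mathbb Z^n\times\mathbb Z^n$, $p\in\mathbb Z$. On $L^2(\mathbb T^{2n})$ write $f=\sum_{\mathbf m}f_{\mathbf m}e^{2\pi i\mathbf m\cdot(\mathbf x,\boldsymbol\xi)}$, $\|f\|_s^2=\sum_{\mathbf m}(1+4\pi^2\mathbf m\cdot\mathbf m)^s|f_{\mathbf m}|^2$, $W^\infty(\mathbb T^{2n})=\bigcap_sW^s$, $W^\infty_0$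 its zero-average subspace. For $\boldsymbol\kappa\in\{\boldsymbol\tau,\boldsymbol\eta\}$, $L_{\boldsymbol\kappa}h(\mathbf x,\boldsymbol\xi)=h((\mathbf x,\boldsymbol\xi)+\boldsymbol\kappa)-h(\mathbf x,\boldsymbol\xi)$, i.e. $L_{\boldsymbol\kappa}$ multiplies the $\mathbf m$-th Fourier coefficient by $e^{2\pi i\mathbf m\cdot\boldsymbol\kappa}-1$. *)

theory Defs
  imports "HOL-Analysis.Analysis"
begin

text \<open>Functions on the torus T^{2n} = T^n x T^n are represented by their Fourier
  coefficient families, indexed by m = (m1, m2) in Z^n x Z^n.
  Points of R^{2n} are pairs (a, b) in R^n x R^n.\<close>

type_synonym ('n) fcoeff = "((int^'n) \<times> (int^'n)) \<Rightarrow> complex"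

definition idot :: "int^'n \<Rightarrow> int^'n \<Rightarrow> real" where
  "idot a b = (\<Sum>j\<in>UNIV. real_of_int (a $ j) * real_of_int (b $ j))"

definition mdot :: "int^'n \<Rightarrow> real^'n \<Rightarrow> real" where
  "mdot m v = (\<Sum>j\<in>UNIV. real_of_int (m $ j) * v $ j)"

definition msq :: "(int^'n) \<times> (int^'n) \<Rightarrow> real" where
  "msq m = idot (fst m) (fst m) + idot (snd m) (snd m)"

definition pdot :: "(int^'n) \<times> (int^'n) \<Rightarrow> (real^'n) \<times> (real^'n) \<Rightarrow> real" where
  "pdot m k = mdot (fst m) (fst k) + mdot (snd m) (snd k)"

definition sob_weight :: "real \<Rightarrow> (int^'n) \<times> (int^'n) \<Rightarrow> real" where
  "sob_weight s m = (1 + 4 * pi\<^sup>2 * msq m) powr s"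

definition in_W :: "real \<Rightarrow> ('n::finite) fcoeff \<Rightarrow> bool" where
  "in_W s f \<longleftrightarrow> (\<lambda>m. sob_weight s m * (cmod (f m))\<^sup>2) summable_on UNIV"

definition sob_norm :: "real \<Rightarrow> ('n::finite) fcoeff \<Rightarrow> real" where
  "sob_norm s f = sqrt (\<Sum>\<^sub>\<infinity>m. sob_weight s m * (cmod (f m))\<^sup>2)"

definition W_inf :: "('n::finite) fcoeff \<Rightarrow> bool" where
  "W_inf f \<longleftrightarrow> (\<forall>s. in_W s f)"

definition W0_inf :: "('n::finite) fcoeff \<Rightarrow> bool" where
  "W0_inf f \<longleftrightarrow> W_inf f \<and> f (0, 0) = 0"

text \<open>L_kappa h (x) = h(x + kappa) - h(x), acting on Fourier coefficients\<close>
definition Lop :: "(real^'n::finite) \<times> (real^'n) \<Rightarrow> 'n fcoeff \<Rightarrow> 'n fcoeff" where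
  "Lop k h = (\<lambda>m. (exp (2 * pi * \<i> * complex_of_real (pdot m k)) - 1) * h m)"

end

theory Submission
  imports Defs
begin

lemma cos_lb: fixes x :: real assumes "x \<ge> 0" shows "cos x \<ge> 1 - x\<^sup>2 / 2"
proof -
  let ?f = "\<lambda>x. cos x - 1 + x\<^sup>2 / 2"
  have "\<And>u. \<lbrakk>0 \<le> u; u \<le> x\<rbrakk> \<Longrightarrow> (?f has_real_derivative (u - sin u)) (at u)"
    by (auto intro!: derivative_eq_intros simp: field_simps)
  then have "?f x \<ge> ?f 0"
    by (intro DERIV_nonneg_imp_nondecreasing[OF assms]) (meson diff_ge_0_iff_ge sin_x_le_x order_trans)
  then show ?thesis by simp
qed

lemma sin_lb: fixes x :: real assumes "x \<ge> 0" shows "sin x \<ge> x - x^3 / 6"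
proof -
  let ?f = "\<lambda>x. sin x - x + x^3 / 6"
  have "\<And>u. \<lbrakk>0 \<le> u; u \<le> x\<rbrakk> \<Longrightarrow> (?f has_real_derivative (cos u - 1 + u\<^sup>2/2)) (at u)"
    by (auto intro!: derivative_eq_intros simp: field_simps power2_eq_square)
  then have "?f x \<ge> ?f 0"
    by (intro DERIV_nonneg_imp_nondecreasing[OF assms]) (smt (verit) cos_lb)
  then show ?thesis by simp
qed

lemma sin_lb2: fixes x :: real assumes "0 \<le> x" "x \<le> 2" shows "sin x \<ge> x / 3"
proof -
  have "x^3 / 6 \<le> 2 * x / 3"
  proof -
    have "x^3 = x * x\<^sup>2" by (simp add: power2_eq_square power3_eq_cube)
    also have "\<dots> \<le> x * 4" using assms mult_mono[of x 2 x 2] by (intro mult_left_mono) (auto simp: power2_eq_square)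
    finally show ?thesis by simp
  qed
  with sin_lb[OF assms(1)] show ?thesis by simp
qed

lemma exp_bound:
  fixes d :: real assumes "\<bar>d\<bar> \<le> 1/2"
  shows "(cmod (exp (2 * pi * \<i> * complex_of_real d) - 1))\<^sup>2 \<ge> d\<^sup>2"
proof -
  define t where "t = pi * d"
  have e: "exp (2 * pi * \<i> * complex_of_real d) = Complex (cos (2*t)) (sin (2*t))"
    unfolding t_def by (simp add: exp_eq_polar cis.ctr mult.commute mult.left_commute mult.assoc)
  have "(cmod (exp (2 * pi * \<i> * complex_of_real d) - 1))\<^sup>2 = (cos (2*t) - 1)\<^sup>2 + (sin (2*t))\<^sup>2"
    unfolding e by (simp add: cmod_def)
  also have "\<dots> = 4 * (sin t)\<^sup>2"
  proof -
    have c: "cos (2*t) = 1 - 2*(sin t)\<^sup>2" by (simp add: cos_double_sin)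
    have s: "sin (2*t) = 2 * sin t * cos t" by (simp add: sin_double)
    have "(sin t)\<^sup>2 + (cos t)\<^sup>2 = 1" by simp
    then show ?thesis unfolding c s by algebra
  qed
  finally have eq: "(cmod (exp (2 * pi * \<i> * complex_of_real d) - 1))\<^sup>2 = 4 * (sin t)\<^sup>2" .
  have "\<bar>t\<bar> \<le> 2" unfolding t_def using assms pi_less_4 mult_mono[of pi 4 "\<bar>d\<bar>" "1/2"] by (auto simp: abs_mult)
  then have "sin \<bar>t\<bar> \<ge> \<bar>t\<bar> / 3" by (intro sin_lb2) auto
  moreover have "\<bar>sin t\<bar> = sin \<bar>t\<bar>"
  proof -
    have "sin \<bar>t\<bar> \<ge> 0" using \<open>\<bar>t\<bar> \<le> 2\<close> pi_gt3 by (intro sin_ge_zero) auto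
    then show ?thesis by (cases "t \<ge> 0") auto
  qed
  ultimately have "\<bar>sin t\<bar> \<ge> \<bar>t\<bar>/3" by simp
  hence "(sin t)\<^sup>2 \<ge> (\<bar>t\<bar>/3)\<^sup>2" by (metis abs_ge_zero power2_abs power_mono divide_nonneg_nonneg zero_le_numeral)
  moreover have "(\<bar>t\<bar>/3)\<^sup>2 = pi\<^sup>2 * d\<^sup>2 / 9" by (simp add: t_def power2_eq_square abs_mult_self_eq algebra_simps) 
  moreover have "pi\<^sup>2 \<ge> 9" using pi_gt3 mult_mono[of 3 pi 3 pi] by (simp add: power2_eq_square)
  then have "pi\<^sup>2 * d\<^sup>2 / 9 \<ge> d\<^sup>2" using mult_right_mono[of 9 "pi\<^sup>2" "d\<^sup>2"] by simp
  ultimately show ?thesis unfolding eq using zero_le_power2[of "sin t"] by linarith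
qed

lemma exp_int_bound:
  fixes \<theta> \<epsilon> :: real
  assumes "\<epsilon> \<ge> 0" and "\<And>p::int. \<bar>\<theta> - real_of_int p\<bar> > \<epsilon>"
  shows "(cmod (exp (2 * pi * \<i> * complex_of_real \<theta>) - 1))\<^sup>2 > \<epsilon>\<^sup>2"
proof -
  define p where "p = round \<theta>"
  define d where "d = \<theta> - real_of_int p"
  have hd: "\<bar>d\<bar> \<le> 1/2" unfolding d_def p_def using of_int_round_abs_le[of \<theta>] by linarith
  have "exp (2 * pi * \<i> * complex_of_real \<theta>) = exp (2 * pi * \<i> * complex_of_real d) * exp ((2 * of_int p * pi) * \<i>)"
  proof -
    have "2 * pi * \<i> * complex_of_real \<theta> = 2 * pi * \<i> * complex_of_real d + (2 * of_int p * pi) * \<i>"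
      by (simp add: d_def algebra_simps)
    then show ?thesis by (simp only: exp_add)
  qed
  also have "exp ((2 * of_int p * pi) * \<i>) = 1" by (rule exp_integer_2pi) simp
  finally have e: "exp (2 * pi * \<i> * complex_of_real \<theta>) = exp (2 * pi * \<i> * complex_of_real d)" by simp
  have "\<bar>d\<bar> > \<epsilon>" using assms(2)[of p] unfolding d_def .
  then have "\<epsilon>\<^sup>2 < d\<^sup>2" using assms(1) by (metis abs_ge_zero power2_abs power_strict_mono zero_less_numeral)
  with exp_bound[OF hd] show ?thesis unfolding e by linarith
qed

lemma idot_nonneg: "idot a a \<ge> 0"
  unfolding idot_def by (intro sum_nonneg) auto

lemma idot_pos: assumes "a \<noteq> 0" shows "idot a a > 0"
proof -
  obtain j where j: "a $ j \<noteq> 0" using assms by (metis vec_eq_iff zero_index)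
  have "0 < real_of_int (a $ j) * real_of_int (a $ j)" using j by (metis of_int_eq_0_iff not_real_square_gt_zero)
  also have "\<dots> \<le> idot a a" unfolding idot_def
    by (rule member_le_sum) auto
  finally show ?thesis .
qed

lemma mdot_zero_right [simp]: "mdot m 0 = 0" unfolding mdot_def by simp
lemma mdot_zero_left [simp]: "mdot 0 v = 0" unfolding mdot_def by simp

lemma div_bound:
  fixes a f :: complex and x c \<gamma> :: real
  assumes "x > 0" "c > 0" "(cmod a)\<^sup>2 > (c * x powr (-\<gamma>))\<^sup>2"
  shows "(cmod (f / a))\<^sup>2 \<le> (cmod f)\<^sup>2 * x powr (2*\<gamma>) / c\<^sup>2"
proof -
  have "(c * x powr (-\<gamma>))\<^sup>2 * x powr (2*\<gamma>) = c\<^sup>2"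
    using assms(1) by (simp add: power_mult_distrib powr_minus power2_eq_square powr_add[symmetric] field_simps)
  moreover have "x powr (2*\<gamma>) > 0" using assms(1) by simp
  ultimately have h: "c\<^sup>2 < (cmod a)\<^sup>2 * x powr (2*\<gamma>)" using assms(3) by (metis mult_strict_right_mono)
  then have "a \<noteq> 0" using assms by auto
  have "(cmod (f / a))\<^sup>2 = (cmod f)\<^sup>2 / (cmod a)\<^sup>2" by (simp add: norm_divide power_divide)
  also have "\<dots> \<le> (cmod f)\<^sup>2 * x powr (2*\<gamma>) / c\<^sup>2"
    using h \<open>a \<noteq> 0\<close> assms(2) mult_right_mono[of "c\<^sup>2" "(cmod a)\<^sup>2 * x powr (2*\<gamma>)" "(cmod f)\<^sup>2"]
    by (simp add: divide_simps mult.commute mult.left_commute)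
  finally show ?thesis .
qed

lemma comb:
  fixes w q F X W c :: real
  assumes "0 \<le> w" "q \<le> F * X / c\<^sup>2" "w * X \<le> W" "c > 0" "0 \<le> F"
  shows "w * q \<le> W * F / c\<^sup>2"
proof -
  have "w * q \<le> w * (F * X / c\<^sup>2)" using assms by (intro mult_left_mono) auto
  also have "\<dots> = F * (w * X) / c\<^sup>2" by simp
  also have "\<dots> \<le> F * W / c\<^sup>2" using assms by (intro divide_right_mono mult_left_mono) auto
  finally show ?thesis by (simp add: mult.commute)
qed

lemma weight_step:
  fixes x s \<gamma> :: real
  assumes "0 < x" "x \<le> msq m" "\<gamma> > 0"
  shows "sob_weight s m * x powr (2*\<gamma>) \<le> sob_weight (s + 2*\<gamma>) m"
proof -
  have "x \<le> 1 + 4 * pi\<^sup>2 * msq m"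
  proof -
    have "1 \<le> pi * pi" using pi_gt3 mult_mono[of 1 pi 1 pi] by simp
    then have "1 \<le> 4 * pi\<^sup>2" by (simp add: power2_eq_square)
    then have "msq m \<le> 4 * pi\<^sup>2 * msq m" using assms
      using mult_right_mono[of 1 "4*pi\<^sup>2" "msq m"] by simp
    then show ?thesis using assms by linarith
  qed
  then have "x powr (2*\<gamma>) \<le> (1 + 4 * pi\<^sup>2 * msq m) powr (2*\<gamma>)"
    using assms by (intro powr_mono2) auto
  then have "sob_weight s m * x powr (2*\<gamma>) \<le> sob_weight s m * (1 + 4 * pi\<^sup>2 * msq m) powr (2*\<gamma>)"
    by (intro mult_left_mono) (auto simp: sob_weight_def)
  also have "\<dots> = sob_weight (s + 2*\<gamma>) m"
    unfolding sob_weight_def using assms by (simp add: powr_add)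
  finally show ?thesis .
qed

theorem proposition2p1:
  fixes tau eta :: "real^'n" and c \<gamma> :: real
  assumes n2: "CARD('n) \<ge> 2"
    and orth: "(\<Sum>j\<in>UNIV. tau $ j * eta $ j) = 0"
    and c_pos: "c > 0" and gamma_pos: "\<gamma> > 0"
    and dio_tau: "\<And>(m1::int^'n) (m2::int^'n) (p::int). m1 \<noteq> 0 \<Longrightarrow>
        \<bar>pdot (m1, m2) (tau, 0) - real_of_int p\<bar> > c * \<bar>idot m1 m1\<bar> powr (- \<gamma>)"
    and dio_eta: "\<And>(m1::int^'n) (m2::int^'n) (p::int). m2 \<noteq> 0 \<Longrightarrow>
        \<bar>pdot (m1, m2) (0, eta) - real_of_int p\<bar> > c * \<bar>idot m2 m2\<bar> powr (- \<gamma>)"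
  shows "\<exists>C>0. \<forall>f g :: 'n fcoeff. W0_inf f \<longrightarrow> W0_inf g \<longrightarrow>
           Lop (tau, 0) g = Lop (0, eta) f \<longrightarrow>
           (\<exists>P. W_inf P \<and> Lop (tau, 0) P = f \<and> Lop (0, eta) P = g \<and>
              (\<forall>s\<ge>0. sob_norm s P \<le> C * (sob_norm (s + 2 * \<gamma>) f + sob_norm (s + 2 * \<gamma>) g)))"

proof -
  define a where "a m = exp (2 * pi * \<i> * complex_of_real (pdot m (tau, 0))) - 1" for m :: "(int^'n) \<times> (int^'n)"
  define b where "b m = exp (2 * pi * \<i> * complex_of_real (pdot m (0, eta))) - 1" for m :: "(int^'n) \<times> (int^'n)"
  have La: "Lop (tau, 0) h = (\<lambda>m. a m * h m)" for h by (simp add: Lop_def a_def)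
  have Lb: "Lop (0, eta) h = (\<lambda>m. b m * h m)" for h by (simp add: Lop_def b_def)
  have msq1: "idot (fst m) (fst m) \<le> msq m" for m :: "(int^'n) \<times> (int^'n)"
    using idot_nonneg[of "snd m"] by (simp add: msq_def)
  have msq2: "idot (snd m) (snd m) \<le> msq m" for m :: "(int^'n) \<times> (int^'n)"
    using idot_nonneg[of "fst m"] by (simp add: msq_def)
  have a0: "fst m = 0 \<Longrightarrow> a m = 0" for m by (simp add: a_def pdot_def)
  have b0: "snd m = 0 \<Longrightarrow> b m = 0" for m by (simp add: b_def pdot_def)
  have abnd: "(cmod (a m))\<^sup>2 > (c * idot (fst m) (fst m) powr (-\<gamma>))\<^sup>2" if "fst m \<noteq> 0" for m
  proof -
    have "\<bar>idot (fst m) (fst m)\<bar> = idot (fst m) (fst m)" using idot_nonneg[of "fst m"] idot_nonneg[of "snd m"] by simp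
    then show ?thesis unfolding a_def
      using dio_tau[of "fst m" "snd m"] that c_pos by (intro exp_int_bound) auto
  qed
  have bbnd: "(cmod (b m))\<^sup>2 > (c * idot (snd m) (snd m) powr (-\<gamma>))\<^sup>2" if "snd m \<noteq> 0" for m
  proof -
    have "\<bar>idot (snd m) (snd m)\<bar> = idot (snd m) (snd m)" using idot_nonneg[of "fst m"] idot_nonneg[of "snd m"] by simp
    then show ?thesis unfolding b_def
      using dio_eta[of "snd m" "fst m"] that c_pos by (intro exp_int_bound) auto
  qed
  have an0: "fst m \<noteq> 0 \<Longrightarrow> a m \<noteq> 0" for m using abnd[of m]
    by (metis norm_zero power_zero_numeral zero_le_power2 not_less)
  have bn0: "snd m \<noteq> 0 \<Longrightarrow> b m \<noteq> 0" for m using bbnd[of m]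
    by (metis norm_zero power_zero_numeral zero_le_power2 not_less)
  show ?thesis
  proof (rule exI[of _ "1 / c"], intro conjI allI impI)
    show "1 / c > 0" using c_pos by simp
    fix f g :: "'n fcoeff"
    assume f0: "W0_inf f" and g0: "W0_inf g" and comm: "Lop (tau, 0) g = Lop (0, eta) f"
    have comm': "a m * g m = b m * f m" for m using fun_cong[OF comm, of m] by (simp add: La Lb)
    have fz: "f (0,0) = 0" and gz: "g (0,0) = 0" using f0 g0 by (auto simp: W0_inf_def)
    define P where "P m = (if fst m \<noteq> 0 then f m / a m else if snd m \<noteq> 0 then g m / b m else 0)" for m
    have m00: "fst m = 0 \<Longrightarrow> snd m = 0 \<Longrightarrow> m = (0,0)" for m :: "(int^'n) \<times> (int^'n)" by (cases m) auto
    have LP1: "Lop (tau, 0) P = f"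
    proof
      fix m show "Lop (tau, 0) P m = f m"
      proof (cases "fst m \<noteq> 0")
        case True then show ?thesis using an0[OF True] by (simp add: La P_def)
      next
        case False
        show ?thesis
        proof (cases "snd m \<noteq> 0")
          case True
          then have "f m = 0" using comm'[of m] a0[of m] False bn0[of m] by simp
          then show ?thesis using False a0[of m] by (simp add: La P_def)
        next
          case False2: False
          then show ?thesis using False m00[of m] fz a0[of m] by (simp add: La P_def)
        qed
      qed
    qed
    have LP2: "Lop (0, eta) P = g"
    proof
      fix m show "Lop (0, eta) P m = g m"
      proof (cases "fst m \<noteq> 0")
        case True
        have "b m * (f m / a m) = g m" using an0[OF True] comm'[of m]
          by (metis mult.commute nonzero_eq_divide_eq times_divide_eq_right)
        then show ?thesis using True by (simp add: Lb P_def)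
      next
        case False
        show ?thesis
        proof (cases "snd m \<noteq> 0")
          case True
          then show ?thesis using False bn0[OF True] by (simp add: Lb P_def)
        next
          case False2: False
          then show ?thesis using False m00[of m] gz by (simp add: Lb P_def)
        qed
      qed
    qed
    have pt: "sob_weight s m * (cmod (P m))\<^sup>2 \<le>
       (1 / c\<^sup>2) * (sob_weight (s + 2*\<gamma>) m * (cmod (f m))\<^sup>2 + sob_weight (s + 2*\<gamma>) m * (cmod (g m))\<^sup>2)"
      for s m
    proof -
      have w0: "sob_weight s m \<ge> 0" "sob_weight (s + 2*\<gamma>) m \<ge> 0" by (auto simp: sob_weight_def)
      have "sob_weight s m * (cmod (P m))\<^sup>2 \<le> sob_weight (s + 2*\<gamma>) m * (cmod (f m))\<^sup>2 / c\<^sup>2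
             \<or> sob_weight s m * (cmod (P m))\<^sup>2 \<le> sob_weight (s + 2*\<gamma>) m * (cmod (g m))\<^sup>2 / c\<^sup>2"
      proof (cases "fst m \<noteq> 0")
        case True
        have xp: "idot (fst m) (fst m) > 0" using idot_pos[OF True] .
        have "sob_weight s m * (cmod (f m / a m))\<^sup>2 \<le> sob_weight (s + 2*\<gamma>) m * (cmod (f m))\<^sup>2 / c\<^sup>2"
          by (rule comb[OF w0(1) div_bound[OF xp c_pos abnd[OF True]] weight_step[OF xp msq1 gamma_pos] c_pos]) simp
        then show ?thesis using True by (simp add: P_def)
      next
        case False
        show ?thesis
        proof (cases "snd m \<noteq> 0")
          case True
          have xp: "idot (snd m) (snd m) > 0" using idot_pos[OF True] .
          have "sob_weight s m * (cmod (g m / b m))\<^sup>2 \<le> sob_weight (s + 2*\<gamma>) m * (cmod (g m))\<^sup>2 / c\<^sup>2"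
            by (rule comb[OF w0(1) div_bound[OF xp c_pos bbnd[OF True]] weight_step[OF xp msq2 gamma_pos] c_pos]) simp
          then show ?thesis using True False by (simp add: P_def)
        next
          case False2: False
          then show ?thesis using False w0 by (simp add: P_def)
        qed
      qed
      moreover have "sob_weight (s + 2*\<gamma>) m * (cmod (f m))\<^sup>2 \<ge> 0" "sob_weight (s + 2*\<gamma>) m * (cmod (g m))\<^sup>2 \<ge> 0"
        using w0 by auto
      then have "sob_weight (s + 2*\<gamma>) m * (cmod (f m))\<^sup>2 / c\<^sup>2 \<ge> 0" "sob_weight (s + 2*\<gamma>) m * (cmod (g m))\<^sup>2 / c\<^sup>2 \<ge> 0"
        by auto
      ultimately show ?thesis by (simp add: add_divide_distrib) linarith
    qed
    have sf: "(\<lambda>m. sob_weight t m * (cmod (f m))\<^sup>2) summable_on UNIV" for t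
      using f0 by (auto simp: W0_inf_def W_inf_def in_W_def)
    have sg: "(\<lambda>m. sob_weight t m * (cmod (g m))\<^sup>2) summable_on UNIV" for t
      using g0 by (auto simp: W0_inf_def W_inf_def in_W_def)
    have sR: "(\<lambda>m. (1 / c\<^sup>2) * (sob_weight (s + 2*\<gamma>) m * (cmod (f m))\<^sup>2 + sob_weight (s + 2*\<gamma>) m * (cmod (g m))\<^sup>2)) summable_on UNIV" for s
      by (intro summable_on_cmult_right summable_on_add sf sg)
    have sP: "(\<lambda>m. sob_weight s m * (cmod (P m))\<^sup>2) summable_on UNIV" for s
      by (rule summable_on_comparison_test[OF sR pt]) (simp add: sob_weight_def)
    show "\<exists>P. W_inf P \<and> Lop (tau, 0) P = f \<and> Lop (0, eta) P = g \<and>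
              (\<forall>s\<ge>0. sob_norm s P \<le> 1 / c * (sob_norm (s + 2 * \<gamma>) f + sob_norm (s + 2 * \<gamma>) g))"
    proof (intro exI[of _ P] conjI allI impI LP1 LP2)
      show "W_inf P" using sP by (simp add: W_inf_def in_W_def)
      fix s :: real
      define A where "A = (\<Sum>\<^sub>\<infinity>m. sob_weight (s + 2*\<gamma>) m * (cmod (f m))\<^sup>2)"
      define B where "B = (\<Sum>\<^sub>\<infinity>m. sob_weight (s + 2*\<gamma>) m * (cmod (g m))\<^sup>2)"
      have A0: "A \<ge> 0" unfolding A_def by (intro infsum_nonneg) (simp add: sob_weight_def)
      have B0: "B \<ge> 0" unfolding B_def by (intro infsum_nonneg) (simp add: sob_weight_def)
      have "(\<Sum>\<^sub>\<infinity>m. sob_weight s m * (cmod (P m))\<^sup>2) \<le>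
            (\<Sum>\<^sub>\<infinity>m. (1 / c\<^sup>2) * (sob_weight (s + 2*\<gamma>) m * (cmod (f m))\<^sup>2 + sob_weight (s + 2*\<gamma>) m * (cmod (g m))\<^sup>2))"
        by (rule infsum_mono[OF sP sR pt])
      also have "\<dots> = (1 / c\<^sup>2) * (A + B)"
        unfolding A_def B_def by (subst infsum_cmult_right') (simp add: infsum_add[OF sf sg])
      finally have le: "(\<Sum>\<^sub>\<infinity>m. sob_weight s m * (cmod (P m))\<^sup>2) \<le> (1 / c\<^sup>2) * (A + B)" .
      have "sob_norm s P \<le> sqrt ((1 / c\<^sup>2) * (A + B))"
        unfolding sob_norm_def using le by simp
      also have "\<dots> = (1 / c) * sqrt (A + B)" using c_pos by (simp add: real_sqrt_mult real_sqrt_divide)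
      also have "\<dots> \<le> (1 / c) * (sqrt A + sqrt B)"
        using c_pos A0 B0 by (intro mult_left_mono sqrt_add_le_add_sqrt) auto
      finally show "sob_norm s P \<le> 1 / c * (sob_norm (s + 2 * \<gamma>) f + sob_norm (s + 2 * \<gamma>) g)"
        by (simp add: sob_norm_def A_def B_def)
    qed
  qed
qed

end
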